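(* Let $A:[1,\infty)\to\mathbb R^{d\times d}$ be continuous with evolution family $T(t,s)$ for $x'=A(t)x$, and let $\mathcal S=\{\|\cdot\|_t;\ t\ge1\}$ be a family of norms on $\mathbb R^d$. Assume there exist $K,a>0$ with $\|T(t,s)x\|_t\le K(t/s)^a\|x\|_s$ and $\|T(s,t)x\|_s\le K(t/s)^a\|x\|_t$ for all $t\ge s\ge1$ and $x\in\mathbb R^d$. Then the following are equivalent: (a) $x'=A(t)x$ admits a strong polynomial dichotomy with respect to $\mathcal S$; (b) the sequence $(A_n)_{n\in\mathbb N}$, $A_n=T(n+1,n)$, admits a strong polynomial dichotomy with respect to the sequence of norms $\{\|\cdot\|_n;\ n\in\mathbb N\}$.
   Context: $\mathbb N=\{1,2,\dots\}$. Strong polynomial dichotomy of $x'=A(t)x$ w.r.t. $\{\|\cdot\|_t\}$: there exist $K>0$, $a\ge\lambda>0$ and projections $P(t)$ with $P(t)T(t,s)=T(t,s)P(s)$ for $t\ge s\ge1$ and, for $t\ge s\ge1$, $x$, $Q(t)=\mathrm{Id}-P(t)$: $\|T(t,s)P(s)x\|_t\le K(t/s)^{-\lambda}\|x\|_s$, $\|T(s,t)Q(t)x\|_s\le K(t/s)^{-\lambda}\|x\|_t$, $\|T(t,s)x\|_t\le K(t/s)^a\|x\|_s$, $\|T(s,t)x\|_s\le K(t/s)^a\|x\|_t$. For a sequence $(A_n)_{n\in\mathbb N}$: $\mathcal A(m,n)=A_{m-1}\cdots A_n$ ($m>n$), $\mathrm{Id}$ ($m=n$), $A_m^{-1}\cdots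 A_{n-1}^{-1}$ ($m<n$). Strong polynomial dichotomy w.r.t. $\{\|\cdot\|_n\}$: there exist $K>0$, $a\ge\lambda>0$ and projections $P_n$ with $A_nP_n=P_{n+1}A_n$ and, for $m\ge n$, $x$: $\|\mathcal A(m,n)P_nx\|_m\le K(m/n)^{-\lambda}\|x\|_n$, $\|\mathcal A(n,m)Q_mx\|_n\le K(m/n)^{-\lambda}\|x\|_m$, $\|\mathcal A(m,n)x\|_m\le K(m/n)^a\|x\|_n$, $\|\mathcal A(n,m)x\|_n\le K(m/n)^a\|x\|_m$. *)

theory Defs
  imports "HOL-Analysis.Analysis"
begin

type_synonym 'd mat = "real^'d^'d"

definition is_norm :: "(real^'d::finite \<Rightarrow> real) \<Rightarrow> bool" where
  "is_norm N \<longleftrightarrow> (\<forall>x. N x = 0 \<longleftrightarrow> x = 0) \<and> (\<forall>c x. N (c *\<^sub>R x) = \<bar>c\<bar> * N x)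
     \<and> (\<forall>x y. N (x + y) \<le> N x + N y)"

definition is_evolution_family :: "(real \<Rightarrow> ('d::finite) mat) \<Rightarrow> (real \<Rightarrow> real \<Rightarrow> 'd mat) \<Rightarrow> bool" where
  "is_evolution_family A T \<longleftrightarrow>
     (\<forall>s\<ge>1. T s s = mat 1 \<and>
        (\<forall>t\<ge>1. ((\<lambda>\<tau>. T \<tau> s) has_vector_derivative (A t ** T t s)) (at t within {1..})))"

definition strong_poly_dichotomy_cont ::
  "(real \<Rightarrow> real \<Rightarrow> ('d::finite) mat) \<Rightarrow> (real \<Rightarrow> real^'d \<Rightarrow> real) \<Rightarrow> bool" where
  "strong_poly_dichotomy_cont T N \<longleftrightarrow>
     (\<exists>K a lam (P :: real \<Rightarrow> 'd mat). K > 0 \<and> a \<ge> lam \<and> lam > 0 \<and>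
        (\<forall>t\<ge>1. P t ** P t = P t) \<and>
        (\<forall>t s. 1 \<le> s \<and> s \<le> t \<longrightarrow> P t ** T t s = T t s ** P s) \<and>
        (\<forall>t s x. 1 \<le> s \<and> s \<le> t \<longrightarrow>
           N t (T t s *v (P s *v x)) \<le> K * (t / s) powr (-lam) * N s x \<and>
           N s (T s t *v ((mat 1 - P t) *v x)) \<le> K * (t / s) powr (-lam) * N t x \<and>
           N t (T t s *v x) \<le> K * (t / s) powr a * N s x \<and>
           N s (T s t *v x) \<le> K * (t / s) powr a * N t x))"

fun prodA :: "(nat \<Rightarrow> ('d::finite) mat) \<Rightarrow> nat \<Rightarrow> nat \<Rightarrow> 'd mat" where
  "prodA As n 0 = mat 1"
| "prodA As n (Suc k) = As (n + k) ** prodA As n k"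

text \<open>calA(m,n): A_{m-1}\<cdots>A_n for m \<ge> n, and
  A_m^{-1}\<cdots>A_{n-1}^{-1} = (A_{n-1}\<cdots>A_m)^{-1} for m < n.\<close>
definition calA :: "(nat \<Rightarrow> ('d::finite) mat) \<Rightarrow> nat \<Rightarrow> nat \<Rightarrow> 'd mat" where
  "calA As m n = (if n \<le> m then prodA As n (m - n) else matrix_inv (prodA As m (n - m)))"

definition strong_poly_dichotomy_disc ::
  "(nat \<Rightarrow> ('d::finite) mat) \<Rightarrow> (nat \<Rightarrow> real^'d \<Rightarrow> real) \<Rightarrow> bool" where
  "strong_poly_dichotomy_disc As N \<longleftrightarrow>
     (\<exists>K a lam (P :: nat \<Rightarrow> 'd mat). K > 0 \<and> a \<ge> lam \<and> lam > 0 \<and>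
        (\<forall>n\<ge>1. P n ** P n = P n) \<and>
        (\<forall>n\<ge>1. As n ** P n = P (Suc n) ** As n) \<and>
        (\<forall>m n x. 1 \<le> n \<and> n \<le> m \<longrightarrow>
           N m (calA As m n *v (P n *v x)) \<le> K * (real m / real n) powr (-lam) * N n x \<and>
           N n (calA As n m *v ((mat 1 - P m) *v x)) \<le> K * (real m / real n) powr (-lam) * N m x \<and>
           N m (calA As m n *v x) \<le> K * (real m / real n) powr a * N n x \<and>
           N n (calA As n m *v x) \<le> K * (real m / real n) powr a * N m x))"

end

theory Submission imports Defs begin

lemma norm_mv_le:
  fixes A :: "real^'n::finite^'m::finite"
  assumes "norm A \<le> M"
  shows "norm (A *v x) \<le> real CARD('m) * real CARD('n) * M * norm x"
proof -
  have "\<And>i j. \<bar>A$i$j\<bar> \<le> M"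
    by (rule order_trans[OF component_le_norm_cart order_trans[OF Finite_Cartesian_Product.norm_nth_le assms]])
  then have "onorm ((*v) A) \<le> real CARD('m) * real CARD('n) * M"
    by (rule onorm_le_matrix_component)
  then have "onorm ((*v) A) * norm x \<le> real CARD('m) * real CARD('n) * M * norm x"
    by (rule mult_right_mono) simp
  then show ?thesis
    using onorm[OF matrix_vector_mul_bounded_linear, of A x] by linarith
qed

lemma sq_deriv:
  fixes y :: "real \<Rightarrow> 'a::real_inner"
  assumes "(y has_vector_derivative v) (at x)"
  shows "((\<lambda>\<tau>. y \<tau> \<bullet> y \<tau>) has_real_derivative (2 * (y x \<bullet> v))) (at x)"
proof -
  have d: "(y has_derivative (\<lambda>h. h *\<^sub>R v)) (at x)"
    using assms by (simp add: has_vector_derivative_def)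
  have "((\<lambda>\<tau>. y \<tau> \<bullet> y \<tau>) has_derivative (\<lambda>h. y x \<bullet> (h *\<^sub>R v) + (h *\<^sub>R v) \<bullet> y x)) (at x)"
    by (rule has_derivative_inner[OF d d])
  moreover have "(\<lambda>h. y x \<bullet> (h *\<^sub>R v) + (h *\<^sub>R v) \<bullet> y x) = (*) (2 * (y x \<bullet> v))"
    by (auto simp: inner_commute algebra_simps)
  ultimately show ?thesis by (simp add: has_field_derivative_def)
qed

lemma vec_uniq:
  fixes A :: "real \<Rightarrow> real^'n::finite^'n" and y :: "real \<Rightarrow> real^'n"
  assumes contA: "continuous_on {1..} A"
   and der: "\<And>t. t \<ge> 1 \<Longrightarrow> (y has_vector_derivative (A t *v y t)) (at t within {1..})"
   and r: "r \<ge> 1" "y r = 0" and t: "t \<ge> 1"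
  shows "y t = 0"
proof -
  define b where "b = max r t"
  have "compact (A ` {1..b})"
    by (rule compact_continuous_image) (auto intro: continuous_on_subset[OF contA])
  then have "bounded (A ` {1..b})" by (rule compact_imp_bounded)
  then obtain M where M0: "\<forall>z\<in>A ` {1..b}. norm z \<le> M"
    unfolding bounded_iff by blast
  have M: "norm (A \<tau>) \<le> M" if "\<tau> \<in> {1..b}" for \<tau>
    using M0 that by blast
  define L where "L = real CARD('n) * real CARD('n) * M"
  have "norm (A r) \<le> M" using r by (intro M) (auto simp: b_def)
  then have "M \<ge> 0" using norm_ge_zero[of "A r"] by linarith
  hence L0: "L \<ge> 0" by (simp add: L_def)
  have AL: "norm (A \<tau> *v x) \<le> L * norm x" if "\<tau> \<in> {1..b}" for \<tau> x
    using norm_mv_le[OF M[OF that]] by (simp add: L_def)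
  have ib: "\<bar>y \<tau> \<bullet> (A \<tau> *v y \<tau>)\<bar> \<le> L * (y \<tau> \<bullet> y \<tau>)" if "\<tau> \<in> {1..b}" for \<tau>
  proof -
    have "\<bar>y \<tau> \<bullet> (A \<tau> *v y \<tau>)\<bar> \<le> norm (y \<tau>) * norm (A \<tau> *v y \<tau>)"
      by (rule Cauchy_Schwarz_ineq2)
    also have "\<dots> \<le> norm (y \<tau>) * (L * norm (y \<tau>))"
      by (rule mult_left_mono[OF AL[OF that]]) simp
    also have "\<dots> = L * (y \<tau> \<bullet> y \<tau>)"
      by (simp add: dot_square_norm power2_eq_square)
    finally show ?thesis .
  qed
  have yat: "(y has_vector_derivative (A x *v y x)) (at x)" if "x > 1" for x
  proof -
    have x1: "x \<ge> 1" using that by simp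
    have "(y has_vector_derivative (A x *v y x)) (at x within {1<..})"
      by (rule has_vector_derivative_within_subset[OF der[OF x1]]) auto
    moreover have "at x within {1<..} = at x"
      by (rule at_within_open) (use that in auto)
    ultimately show ?thesis by simp
  qed
  have conty: "continuous_on {1..} y"
    unfolding continuous_on_eq_continuous_within
    using der has_vector_derivative_continuous by blast
  have contg: "continuous_on S (\<lambda>\<tau>. exp (c * \<tau>) * (y \<tau> \<bullet> y \<tau>))" if "S \<subseteq> {1..}" for S c
    using continuous_on_subset[OF conty that]
    by (intro continuous_intros) auto
  have ed: "((\<lambda>\<tau>. exp (c * \<tau>)) has_real_derivative (c * exp (c*x))) (at x)" for c x
    by (auto intro!: derivative_eq_intros)
  show ?thesis
  proof (cases "r \<le> t")
    case True
    define g where "g = (\<lambda>\<tau>. exp (- (2*L) * \<tau>) * (y \<tau> \<bullet> y \<tau>))"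
    have "g r \<ge> g t"
    proof (rule DERIV_nonpos_imp_decreasing_open[OF True])
      fix x assume x: "r < x" "x < t"
      have xb: "x \<in> {1..b}" using x r by (auto simp: b_def)
      have "(g has_real_derivative
          (- (2*L) * exp (- (2*L) * x) * (y x \<bullet> y x) + exp (- (2*L) * x) * (2 * (y x \<bullet> (A x *v y x))))) (at x)"
        unfolding g_def using DERIV_mult[OF ed[of "- (2*L)" x] sq_deriv[OF yat[of x]]] x r
        by (simp add: algebra_simps)
      moreover have "- (2*L) * exp (- (2*L) * x) * (y x \<bullet> y x) + exp (- (2*L) * x) * (2 * (y x \<bullet> (A x *v y x))) \<le> 0"
      proof -
        have "y x \<bullet> (A x *v y x) \<le> L * (y x \<bullet> y x)" using ib[OF xb] by linarith
        then have "2 * (y x \<bullet> (A x *v y x)) - 2 * L * (y x \<bullet> y x) \<le> 0" by linarith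
        then have "exp (- (2*L) * x) * (2 * (y x \<bullet> (A x *v y x)) - 2 * L * (y x \<bullet> y x)) \<le> 0"
          by (simp add: mult_nonneg_nonpos)
        then show ?thesis by (simp add: algebra_simps)
      qed
      ultimately show "\<exists>y. (g has_real_derivative y) (at x) \<and> y \<le> 0" by blast
    next
      show "continuous_on {r..t} g" unfolding g_def using r by (intro contg) auto
    qed
    then have "g t \<le> 0" using r by (simp add: g_def)
    then have "y t \<bullet> y t \<le> 0" by (simp add: g_def mult_le_0_iff)
    then have "y t \<bullet> y t = 0" using inner_ge_zero[of "y t"] by linarith
    then show ?thesis by simp
  next
    case False
    define g where "g = (\<lambda>\<tau>. exp ((2*L) * \<tau>) * (y \<tau> \<bullet> y \<tau>))"
    have "g t \<le> g r"
    proof (rule DERIV_nonneg_imp_increasing_open[of t r g])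
      show "t \<le> r" using False by simp
      fix x assume x: "t < x" "x < r"
      have xb: "x \<in> {1..b}" using x t by (auto simp: b_def)
      have "(g has_real_derivative
          ((2*L) * exp ((2*L) * x) * (y x \<bullet> y x) + exp ((2*L) * x) * (2 * (y x \<bullet> (A x *v y x))))) (at x)"
        unfolding g_def using DERIV_mult[OF ed[of "2*L" x] sq_deriv[OF yat[of x]]] x t
        by (simp add: algebra_simps)
      moreover have "(2*L) * exp ((2*L) * x) * (y x \<bullet> y x) + exp ((2*L) * x) * (2 * (y x \<bullet> (A x *v y x))) \<ge> 0"
      proof -
        have "- (y x \<bullet> (A x *v y x)) \<le> L * (y x \<bullet> y x)" using ib[OF xb] by linarith
        then have "2 * (y x \<bullet> (A x *v y x)) + 2 * L * (y x \<bullet> y x) \<ge> 0" by linarith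
        then have "exp ((2*L) * x) * (2 * (y x \<bullet> (A x *v y x)) + 2 * L * (y x \<bullet> y x)) \<ge> 0"
          by simp
        then show ?thesis by (simp add: algebra_simps)
      qed
      ultimately show "\<exists>y. (g has_real_derivative y) (at x) \<and> y \<ge> 0" by blast
    next
      show "continuous_on {t..r} g" unfolding g_def using t by (intro contg) auto
    qed
    then have "g t \<le> 0" using r by (simp add: g_def)
    then have "y t \<bullet> y t \<le> 0" by (simp add: g_def mult_le_0_iff)
    then have "y t \<bullet> y t = 0" using inner_ge_zero[of "y t"] by linarith
    then show ?thesis by simp
  qed
qed


lemma bl_mv: "bounded_linear (\<lambda>M::real^'n::finite^'m::finite. M *v v)"
  unfolding linear_conv_bounded_linear[symmetric]
  by (rule linearI) (auto simp: matrix_vector_mult_def vec_eq_iff sum.distrib algebra_simps sum_distrib_left)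

lemma bl_mm: "bounded_linear (\<lambda>M::real^'n::finite^'m::finite. M ** (C::real^'k::finite^'n))"
  unfolding linear_conv_bounded_linear[symmetric]
  by (rule linearI) (auto simp: matrix_matrix_mult_def vec_eq_iff sum.distrib algebra_simps sum_distrib_left)

lemma matrix_sub_ldistrib: "(A::real^'n::finite^'m::finite) ** (B - C) = A ** B - A ** C"
  by (simp add: matrix_matrix_mult_def vec_eq_iff sum_subtractf algebra_simps)

lemma matrix_sub_rdistrib: "((B::real^'n::finite^'m::finite) - C) ** (A::real^'k::finite^'n) = B ** A - C ** A"
  by (simp add: matrix_matrix_mult_def vec_eq_iff sum_subtractf algebra_simps)

lemma mat_uniq:
  fixes A :: "real \<Rightarrow> real^'n::finite^'n" and Y :: "real \<Rightarrow> real^'n^'n"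
  assumes contA: "continuous_on {1..} A"
   and der: "\<And>t. t \<ge> 1 \<Longrightarrow> (Y has_vector_derivative (A t ** Y t)) (at t within {1..})"
   and r: "r \<ge> 1" "Y r = 0" and t: "t \<ge> 1"
  shows "Y t = 0"
proof -
  have "Y t *v v = 0" for v
  proof (rule vec_uniq[OF contA _ r(1) _ t])
    fix \<tau> :: real assume "\<tau> \<ge> 1"
    from bounded_linear.has_vector_derivative[OF bl_mv der[OF this], of v]
    show "((\<lambda>x. Y x *v v) has_vector_derivative A \<tau> *v (Y \<tau> *v v)) (at \<tau> within {1..})"
      by (simp add: matrix_vector_mul_assoc)
  next
    show "Y r *v v = 0" using r by simp
  qed
  then show ?thesis by (simp add: matrix_eq)
qed

lemma evol_cocycle:
  fixes A :: "real \<Rightarrow> real^'n::finite^'n" and T :: "real \<Rightarrow> real \<Rightarrow> real^'n^'n"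
  assumes contA: "continuous_on {1..} A" and evol: "is_evolution_family A T"
    and "t \<ge> 1" "r \<ge> 1" "s \<ge> 1"
  shows "T t r ** T r s = T t s"
proof -
  have d: "\<And>t s. s \<ge> 1 \<Longrightarrow> t \<ge> 1 \<Longrightarrow> ((\<lambda>\<tau>. T \<tau> s) has_vector_derivative (A t ** T t s)) (at t within {1..})"
    and id: "\<And>s. s \<ge> 1 \<Longrightarrow> T s s = mat 1"
    using evol unfolding is_evolution_family_def by auto
  define Y where "Y = (\<lambda>\<tau>. T \<tau> s - T \<tau> r ** T r s)"
  have "Y t = 0"
  proof (rule mat_uniq[OF contA _ \<open>r \<ge> 1\<close> _ \<open>t \<ge> 1\<close>])
    fix \<tau> :: real assume "\<tau> \<ge> 1"
    have "(Y has_vector_derivative (A \<tau> ** T \<tau> s - (A \<tau> ** T \<tau> r) ** T r s)) (at \<tau> within {1..})"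
      unfolding Y_def
      by (intro has_vector_derivative_diff d bounded_linear.has_vector_derivative[OF bl_mm]) (use assms \<open>\<tau> \<ge> 1\<close> in auto)
    then show "(Y has_vector_derivative (A \<tau> ** Y \<tau>)) (at \<tau> within {1..})"
      by (simp add: Y_def matrix_sub_ldistrib matrix_mul_assoc)
  next
    show "Y r = 0" using id[OF \<open>r \<ge> 1\<close>] by (simp add: Y_def)
  qed
  then show ?thesis by (simp add: Y_def)
qed

lemma matrix_inv_eqI:
  fixes A B :: "real^'n::finite^'n"
  assumes "A ** B = mat 1" "B ** A = mat 1"
  shows "matrix_inv A = B"
proof -
  let ?C = "matrix_inv A"
  have C: "A ** ?C = mat 1 \<and> ?C ** A = mat 1"
    unfolding matrix_inv_def by (rule someI[of _ B]) (simp add: assms)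
  have "?C = ?C ** (A ** B)" by (simp add: assms)
  also have "\<dots> = (?C ** A) ** B" by (simp add: matrix_mul_assoc)
  also have "\<dots> = B" using C by simp
  finally show ?thesis .
qed

lemma is_norm_nonneg:
  assumes "is_norm N" shows "N x \<ge> 0"
proof -
  have z: "N 0 = 0" using assms unfolding is_norm_def by auto
  have "N (x + (- x)) \<le> N x + N (- x)" using assms unfolding is_norm_def by blast
  moreover have h: "\<And>c x. N (c *\<^sub>R x) = \<bar>c\<bar> * N x" using assms unfolding is_norm_def by blast
  moreover have "N (- x) = N x" using h[of "-1" x] by simp
  ultimately show ?thesis using z by simp
qed


lemma prodA_T:
  fixes T :: "real \<Rightarrow> real \<Rightarrow> real^'n::finite^'n"
  assumes coc: "\<And>t r s. 1\<le>t \<Longrightarrow> 1\<le>r \<Longrightarrow> 1\<le>s \<Longrightarrow> T t r ** T r s = T t s"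
    and id: "\<And>s. 1 \<le> s \<Longrightarrow> T s s = mat 1" and n: "n \<ge> 1"
  shows "prodA (\<lambda>n. T (real n + 1) (real n)) n k = T (real (n+k)) (real n)"
proof (induction k)
  case 0
  then show ?case using id n by simp
next
  case (Suc k)
  have "prodA (\<lambda>n. T (real n + 1) (real n)) n (Suc k) = T (real (n+k) + 1) (real (n+k)) ** T (real (n+k)) (real n)"
    using Suc by simp
  also have "\<dots> = T (real (n+k) + 1) (real n)"
    by (rule coc) (use n in auto)
  finally show ?case by (simp add: add.commute add.left_commute)
qed

lemma calA_T:
  fixes T :: "real \<Rightarrow> real \<Rightarrow> real^'n::finite^'n"
  assumes coc: "\<And>t r s. 1\<le>t \<Longrightarrow> 1\<le>r \<Longrightarrow> 1\<le>s \<Longrightarrow> T t r ** T r s = T t s"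
    and id: "\<And>s. 1 \<le> s \<Longrightarrow> T s s = mat 1" and "m \<ge> 1" "n \<ge> 1"
  shows "calA (\<lambda>n. T (real n + 1) (real n)) m n = T (real m) (real n)"
proof (cases "n \<le> m")
  case True
  then show ?thesis unfolding calA_def using prodA_T[of T n "m - n", OF coc id \<open>n \<ge> 1\<close>] by simp
next
  case False
  then have "calA (\<lambda>n. T (real n + 1) (real n)) m n = matrix_inv (T (real n) (real m))"
    unfolding calA_def using prodA_T[of T m "n - m", OF coc id \<open>m \<ge> 1\<close>] by simp
  also have "\<dots> = T (real m) (real n)"
  proof (rule matrix_inv_eqI)
    show "T (real n) (real m) ** T (real m) (real n) = mat 1"
      using coc[of "real n" "real m" "real n"] id[of "real n"] assms by simp
    show "T (real m) (real n) ** T (real n) (real m) = mat 1"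
      using coc[of "real m" "real n" "real m"] id[of "real m"] assms by simp
  qed
  finally show ?thesis .
qed

lemma chain3:
  fixes a b c d c1 c2 c3 d1 d2 d3 :: real
  assumes "a \<le> c1 * b" "b \<le> c2 * c" "c \<le> c3 * d" "0 \<le> c1" "0 \<le> c2" "0 \<le> c3" "0 \<le> d"
    "c1 \<le> d1" "c2 \<le> d2" "c3 \<le> d3"
  shows "a \<le> d1 * d2 * d3 * d"
proof -
  have "c2 * c \<le> c2 * (c3 * d)" by (rule mult_left_mono) (use assms in auto)
  then have "b \<le> c2 * (c3 * d)" using assms by linarith
  then have "c1 * b \<le> c1 * (c2 * (c3 * d))" by (rule mult_left_mono) (use assms in auto)
  then have "a \<le> c1 * c2 * c3 * d" using assms by (simp add: mult.assoc)
  also have "\<dots> \<le> d1 * d2 * d3 * d"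
    using assms by (intro mult_right_mono mult_mono) auto
  finally show ?thesis .
qed

lemma powr_ratio1:
  fixes t m a :: real
  assumes "1 \<le> m" "m \<le> t" "t < m + 1" "0 \<le> a"
  shows "(t / m) powr a \<le> 2 powr a"
  by (rule powr_mono2) (use assms in \<open>auto simp: field_simps\<close>)

lemma powr_ratio2:
  fixes t s m n lam :: real
  assumes "1 \<le> n" "n \<le> s" "s \<le> t" "t < m + 1" "1 \<le> m" "0 \<le> lam"
  shows "(m / n) powr (- lam) \<le> 2 powr lam * (t / s) powr (- lam)"
proof -
  have "t / s \<le> 2 * (m / n)"
  proof -
    have "t / s \<le> t / n" using assms by (intro divide_left_mono) auto
    also have "\<dots> \<le> (2 * m) / n" using assms by (intro divide_right_mono) auto
    finally show ?thesis by simp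
  qed
  then have le: "1 / (m / n) \<le> 2 / (t / s)"
    using assms by (simp add: field_simps)
  have "(m / n) powr (- lam) = (1 / (m / n)) powr lam"
    using assms by (simp add: powr_minus_divide powr_divide)
  also have "\<dots> \<le> (2 / (t / s)) powr lam"
    by (rule powr_mono2) (use assms le in auto)
  also have "\<dots> = 2 powr lam * (t / s) powr (- lam)"
    using assms by (simp add: powr_divide powr_minus_divide powr_mult)
  finally show ?thesis .
qed


theorem proposition5p2:
  fixes A :: "real \<Rightarrow> real^'d::finite^'d"
    and T :: "real \<Rightarrow> real \<Rightarrow> real^'d::finite^'d"
    and N :: "real \<Rightarrow> real^'d \<Rightarrow> real"
  assumes contA: "continuous_on {1..} A"
    and evol: "is_evolution_family A T"
    and norms: "\<forall>t\<ge>1. is_norm (N t)"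
    and growth: "\<exists>K a. K > 0 \<and> a > 0 \<and>
       (\<forall>t s x. 1 \<le> s \<and> s \<le> t \<longrightarrow>
          N t (T t s *v x) \<le> K * (t / s) powr a * N s x \<and>
          N s (T s t *v x) \<le> K * (t / s) powr a * N t x)"
  shows "strong_poly_dichotomy_cont T N \<longleftrightarrow>
         strong_poly_dichotomy_disc (\<lambda>n. T (real n + 1) (real n)) (\<lambda>n. N (real n))"
proof -
  have coc: "\<And>t r s. 1\<le>t \<Longrightarrow> 1\<le>r \<Longrightarrow> 1\<le>s \<Longrightarrow> T t r ** T r s = T t s"
    using evol_cocycle[OF contA evol] by blast
  have coc3: "(X ** T t r) ** T r s = X ** T t s" if "1\<le>t" "1\<le>r" "1\<le>s" for X t r s
  proof -
    have "(X ** T t r) ** T r s = X ** (T t r ** T r s)" by (simp add: matrix_mul_assoc)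
    then show ?thesis using coc that by simp
  qed
  have coc2: "T t r ** (T r s ** X) = T t s ** X" if "1\<le>t" "1\<le>r" "1\<le>s" for X t r s
  proof -
    have "T t r ** (T r s ** X) = (T t r ** T r s) ** X" by (simp add: matrix_mul_assoc)
    then show ?thesis using coc that by simp
  qed
  have id: "\<And>s. 1 \<le> s \<Longrightarrow> T s s = mat 1"
    using evol unfolding is_evolution_family_def by blast
  have cal: "\<And>m n. 1 \<le> m \<Longrightarrow> 1 \<le> n \<Longrightarrow> calA (\<lambda>n. T (real n + 1) (real n)) m n = T (real m) (real n)"
    using calA_T[of T, OF coc id] by blast
  have nn: "\<And>t x. 1 \<le> t \<Longrightarrow> N t x \<ge> 0"
    using norms is_norm_nonneg by blast
  obtain K0 a0 where K0: "K0 > 0" "a0 > 0" and gr: "\<And>t s x. 1 \<le> s \<Longrightarrow> s \<le> t \<Longrightarrow>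
          N t (T t s *v x) \<le> K0 * (t / s) powr a0 * N s x \<and>
          N s (T s t *v x) \<le> K0 * (t / s) powr a0 * N t x"
    using growth by blast
  show ?thesis
  proof
    assume "strong_poly_dichotomy_cont T N"
    then obtain K a lam and P :: "real \<Rightarrow> 'd mat" where Kp: "K > 0" "a \<ge> lam" "lam > 0"
      and Pidem: "\<forall>t\<ge>1. P t ** P t = P t"
      and Pcomm: "\<forall>t s. 1 \<le> s \<and> s \<le> t \<longrightarrow> P t ** T t s = T t s ** P s"
      and Pb: "\<forall>t s x. 1 \<le> s \<and> s \<le> t \<longrightarrow>
           N t (T t s *v (P s *v x)) \<le> K * (t / s) powr (-lam) * N s x \<and>
           N s (T s t *v ((mat 1 - P t) *v x)) \<le> K * (t / s) powr (-lam) * N t x \<and>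
           N t (T t s *v x) \<le> K * (t / s) powr a * N s x \<and>
           N s (T s t *v x) \<le> K * (t / s) powr a * N t x"
      unfolding strong_poly_dichotomy_cont_def by blast
    show "strong_poly_dichotomy_disc (\<lambda>n. T (real n + 1) (real n)) (\<lambda>n. N (real n))"
      unfolding strong_poly_dichotomy_disc_def
    proof (intro exI conjI allI impI)
      show "K > 0" "a \<ge> lam" "lam > 0" by fact+
      fix n :: nat assume "1 \<le> n"
      then show "P (real n) ** P (real n) = P (real n)" using Pidem by simp
    next
      fix n :: nat assume "1 \<le> n"
      have e: "real (Suc n) = real n + 1" by simp
      show "T (real n + 1) (real n) ** P (real n) = P (real (Suc n)) ** T (real n + 1) (real n)"
        unfolding e using Pcomm[rule_format, of "real n" "real n + 1"] \<open>1 \<le> n\<close> by simp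
    next
      fix m n :: nat and x assume mn: "1 \<le> n \<and> n \<le> m"
      then have c1: "calA (\<lambda>n. T (real n + 1) (real n)) m n = T (real m) (real n)"
        and c2: "calA (\<lambda>n. T (real n + 1) (real n)) n m = T (real n) (real m)"
        using cal by auto
      have b: "1 \<le> real n \<and> real n \<le> real m" using mn by simp
      note B = Pb[rule_format, OF b, of x]
      show "N (real m) (calA (\<lambda>n. T (real n + 1) (real n)) m n *v (P (real n) *v x)) \<le> K * (real m / real n) powr - lam * N (real n) x"
        using B c1 by simp
      show "N (real n) (calA (\<lambda>n. T (real n + 1) (real n)) n m *v ((mat 1 - P (real m)) *v x)) \<le> K * (real m / real n) powr - lam * N (real m) x"
        using B c2 by simp
      show "N (real m) (calA (\<lambda>n. T (real n + 1) (real n)) m n *v x) \<le> K * (real m / real n) powr a * N (real n) x"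
        using B c1 by simp
      show "N (real n) (calA (\<lambda>n. T (real n + 1) (real n)) n m *v x) \<le> K * (real m / real n) powr a * N (real m) x"
        using B c2 by simp
    qed
  next
    assume "strong_poly_dichotomy_disc (\<lambda>n. T (real n + 1) (real n)) (\<lambda>n. N (real n))"
    then obtain K a lam and P :: "nat \<Rightarrow> 'd mat" where Kp: "K > 0" "a \<ge> lam" "lam > 0"
      and Pidem: "\<forall>n\<ge>1. P n ** P n = P n"
      and Pcomm: "\<forall>n\<ge>1. T (real n + 1) (real n) ** P n = P (Suc n) ** T (real n + 1) (real n)"
      and Pb: "\<forall>m n x. 1 \<le> n \<and> n \<le> m \<longrightarrow>
           N (real m) (calA (\<lambda>n. T (real n + 1) (real n)) m n *v (P n *v x)) \<le> K * (real m / real n) powr (-lam) * N (real n) x \<and>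
           N (real n) (calA (\<lambda>n. T (real n + 1) (real n)) n m *v ((mat 1 - P m) *v x)) \<le> K * (real m / real n) powr (-lam) * N (real m) x \<and>
           N (real m) (calA (\<lambda>n. T (real n + 1) (real n)) m n *v x) \<le> K * (real m / real n) powr a * N (real n) x \<and>
           N (real n) (calA (\<lambda>n. T (real n + 1) (real n)) n m *v x) \<le> K * (real m / real n) powr a * N (real m) x"
      unfolding strong_poly_dichotomy_disc_def by blast
    have dcomm0: "T (real (n+k)) (real n) ** P n = P (n+k) ** T (real (n+k)) (real n)" if "1 \<le> n" for n k
    proof (induction k)
      case 0 then show ?case using id that by simp
    next
      case (Suc k)
      have e: "real (n + Suc k) = real (n+k) + 1" by simp
      define U where "U = T (real (n+k) + 1) (real (n+k))"
      define V where "V = T (real (n+k)) (real n)"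
      have h: "T (real (n + Suc k)) (real n) = U ** V"
        unfolding e U_def V_def by (rule coc[symmetric]) (use that in auto)
      have pc: "U ** P (n+k) = P (Suc (n+k)) ** U"
        unfolding U_def by (rule Pcomm[rule_format]) (use that in simp)
      have IH: "V ** P n = P (n+k) ** V" using Suc by (simp only: V_def)
      have "T (real (n + Suc k)) (real n) ** P n = U ** (V ** P n)"
        by (simp only: h matrix_mul_assoc)
      also have "\<dots> = (U ** P (n+k)) ** V" by (simp only: IH matrix_mul_assoc)
      also have "\<dots> = P (n + Suc k) ** T (real (n + Suc k)) (real n)"
        using h by (simp only: pc matrix_mul_assoc add_Suc_right)
      finally show ?case .
    qed
    have dcomm: "T (real m) (real n) ** P n = P m ** T (real m) (real n)" if "1 \<le> n" "n \<le> m" for m n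
      using dcomm0[OF that(1), of "m - n"] that by simp
    define fl where "fl = (\<lambda>t::real. nat \<lfloor>t\<rfloor>)"
    have flr: "real (fl t) = of_int \<lfloor>t\<rfloor>" if "1 \<le> t" for t
      using that by (simp add: fl_def)
    have fl1: "1 \<le> fl t" "1 \<le> real (fl t)" if "1 \<le> t" for t
      using that by (auto simp: fl_def le_nat_iff)
    have flle: "real (fl t) \<le> t" "t < real (fl t) + 1" if "1 \<le> t" for t
      using flr[OF that] floor_correct[of t] by auto
    have flmono: "fl s \<le> fl t" if "s \<le> t" for s t
      using that unfolding fl_def by (intro nat_mono floor_mono)
    define Pc where "Pc = (\<lambda>t. T t (real (fl t)) ** P (fl t) ** T (real (fl t)) t)"
    define D where "D = K0 * 2 powr a0 * (K * 2 powr lam) * (K0 * 2 powr a0)"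
    have D0: "D > 0" using K0 Kp by (simp add: D_def)
    show "strong_poly_dichotomy_cont T N"
      unfolding strong_poly_dichotomy_cont_def
    proof (rule exI[of _ "max K0 D"], rule exI[of _ "max a0 lam"], rule exI[of _ lam], rule exI[of _ Pc], intro conjI allI impI)
      show "max K0 D > 0" using K0 by simp
      show "max a0 lam \<ge> lam" by simp
      show "lam > 0" by fact
    next
      fix t :: real assume t: "1 \<le> t"
      note f = fl1[OF t] flle[OF t]
      have "Pc t ** Pc t = T t (real (fl t)) ** (P (fl t) ** (T (real (fl t)) t ** T t (real (fl t)))) ** P (fl t) ** T (real (fl t)) t"
        unfolding Pc_def by (simp add: matrix_mul_assoc)
      also have "\<dots> = T t (real (fl t)) ** (P (fl t) ** P (fl t)) ** T (real (fl t)) t"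
        using coc[of "real (fl t)" t "real (fl t)"] id[of "real (fl t)"] f t by (simp add: matrix_mul_assoc)
      also have "\<dots> = Pc t" using Pidem f by (simp add: Pc_def)
      finally show "Pc t ** Pc t = Pc t" .
    next
      fix t s :: real assume ts: "1 \<le> s \<and> s \<le> t"
      then have t: "1 \<le> t" and s: "1 \<le> s" and st: "s \<le> t" by auto
      define m where "m = fl t"
      define n where "n = fl s"
      have m1: "1 \<le> m" "1 \<le> real m" and n1: "1 \<le> n" "1 \<le> real n"
        using fl1[OF t] fl1[OF s] by (auto simp: m_def n_def)
      have nm: "n \<le> m" unfolding m_def n_def by (rule flmono[OF st])
      have mt: "real m \<le> t" "t < real m + 1" using flle[OF t] by (auto simp: m_def)
      have ns: "real n \<le> s" "s < real n + 1" using flle[OF s] by (auto simp: n_def)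
      have Pct: "Pc t = T t (real m) ** P m ** T (real m) t" by (simp add: Pc_def m_def)
      have Pcs: "Pc s = T s (real n) ** P n ** T (real n) s" by (simp add: Pc_def n_def)
      have "Pc t ** T t s = T t (real m) ** (P m ** T (real m) (real n)) ** T (real n) s"
        unfolding Pct using m1 n1 t s
        by (simp add: matrix_mul_assoc[symmetric] coc coc2)
      also have "\<dots> = T t (real m) ** (T (real m) (real n) ** P n) ** T (real n) s"
        using dcomm[OF n1(1) nm] by simp
      also have "\<dots> = T t s ** Pc s"
        unfolding Pcs using m1 n1 t s
        by (simp add: matrix_mul_assoc[symmetric] coc coc2)
      finally show "Pc t ** T t s = T t s ** Pc s" .
    next
      fix t s :: real and x assume ts: "1 \<le> s \<and> s \<le> t"
      then have t: "1 \<le> t" and s: "1 \<le> s" and st: "s \<le> t" by auto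
      define m where "m = fl t"
      define n where "n = fl s"
      have m1: "1 \<le> m" "1 \<le> real m" and n1: "1 \<le> n" "1 \<le> real n"
        using fl1[OF t] fl1[OF s] by (auto simp: m_def n_def)
      have nm: "n \<le> m" unfolding m_def n_def by (rule flmono[OF st])
      have mt: "real m \<le> t" "t < real m + 1" using flle[OF t] by (auto simp: m_def)
      have ns: "real n \<le> s" "s < real n + 1" using flle[OF s] by (auto simp: n_def)
      have Pct: "Pc t = T t (real m) ** P m ** T (real m) t" by (simp add: Pc_def m_def)
      have Pcs: "Pc s = T s (real n) ** P n ** T (real n) s" by (simp add: Pc_def n_def)
      have c1: "calA (\<lambda>n. T (real n + 1) (real n)) m n = T (real m) (real n)"
        and c2: "calA (\<lambda>n. T (real n + 1) (real n)) n m = T (real n) (real m)"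
        using cal m1 n1 by auto
      note B = Pb[rule_format, of n m, OF conjI[OF n1(1) nm]]
      have tm: "(t / real m) powr a0 \<le> 2 powr a0"
        by (rule powr_ratio1) (use mt m1 K0 in auto)
      have sn: "(s / real n) powr a0 \<le> 2 powr a0"
        by (rule powr_ratio1) (use ns n1 K0 in auto)
      have mn: "(real m / real n) powr (- lam) \<le> 2 powr lam * (t / s) powr (- lam)"
        by (rule powr_ratio2) (use mt ns m1 n1 st Kp in auto)
      have Ns: "N s x \<ge> 0" "N t x \<ge> 0" using nn s t by auto
      have DK: "D * (t / s) powr (- lam) \<le> max K0 D * (t / s) powr (- lam)" by (rule mult_right_mono) auto
      have v1: "T t s *v (Pc s *v x) = T t (real m) *v (calA (\<lambda>n. T (real n + 1) (real n)) m n *v (P n *v (T (real n) s *v x)))"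
      proof -
        have "T t s ** Pc s = T t (real m) ** T (real m) (real n) ** P n ** T (real n) s"
          unfolding Pcs using m1 n1 t s
          by (simp add: matrix_mul_assoc[symmetric] coc coc2)
        then show ?thesis unfolding c1
          by (metis matrix_vector_mul_assoc)
      qed
      have "N t (T t s *v (Pc s *v x)) \<le> (K0 * 2 powr a0) * (K * (2 powr lam * (t / s) powr (- lam))) * (K0 * 2 powr a0) * N s x"
        unfolding v1
      proof (rule chain3)
        show "N t (T t (real m) *v (calA (\<lambda>n. T (real n + 1) (real n)) m n *v (P n *v (T (real n) s *v x))))
          \<le> (K0 * (t / real m) powr a0) * N (real m) (calA (\<lambda>n. T (real n + 1) (real n)) m n *v (P n *v (T (real n) s *v x)))"
          using gr[of "real m" t] m1 mt by simp
        show "N (real m) (calA (\<lambda>n. T (real n + 1) (real n)) m n *v (P n *v (T (real n) s *v x)))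
          \<le> (K * (real m / real n) powr (- lam)) * N (real n) (T (real n) s *v x)"
          using B by simp
        show "N (real n) (T (real n) s *v x) \<le> (K0 * (s / real n) powr a0) * N s x"
          using gr[of "real n" s] n1 ns by simp
      qed (use K0 Kp Ns tm sn mn in \<open>auto intro: mult_left_mono\<close>)
      also have "\<dots> = D * (t / s) powr (- lam) * N s x" by (simp add: D_def algebra_simps)
      also have "\<dots> \<le> max K0 D * (t / s) powr (- lam) * N s x" by (rule mult_right_mono[OF DK Ns(1)])
      finally show "N t (T t s *v (Pc s *v x)) \<le> max K0 D * (t / s) powr (- lam) * N s x" .
      have v2: "T s t *v ((mat 1 - Pc t) *v x) = T s (real n) *v (calA (\<lambda>n. T (real n + 1) (real n)) n m *v ((mat 1 - P m) *v (T (real m) t *v x)))"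
      proof -
        have "T s t ** (mat 1 - Pc t) = T s (real n) ** T (real n) (real m) ** (mat 1 - P m) ** T (real m) t"
          unfolding Pct using m1 n1 t s
          by (simp add: matrix_mul_assoc[symmetric] matrix_sub_ldistrib matrix_sub_rdistrib coc coc2)
        then show ?thesis unfolding c2
          by (metis matrix_vector_mul_assoc)
      qed
      have "N s (T s t *v ((mat 1 - Pc t) *v x)) \<le> (K0 * 2 powr a0) * (K * (2 powr lam * (t / s) powr (- lam))) * (K0 * 2 powr a0) * N t x"
        unfolding v2
      proof (rule chain3)
        show "N s (T s (real n) *v (calA (\<lambda>n. T (real n + 1) (real n)) n m *v ((mat 1 - P m) *v (T (real m) t *v x))))
          \<le> (K0 * (s / real n) powr a0) * N (real n) (calA (\<lambda>n. T (real n + 1) (real n)) n m *v ((mat 1 - P m) *v (T (real m) t *v x)))"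
          using gr[of "real n" s] n1 ns by simp
        show "N (real n) (calA (\<lambda>n. T (real n + 1) (real n)) n m *v ((mat 1 - P m) *v (T (real m) t *v x)))
          \<le> (K * (real m / real n) powr (- lam)) * N (real m) (T (real m) t *v x)"
          using B by simp
        show "N (real m) (T (real m) t *v x) \<le> (K0 * (t / real m) powr a0) * N t x"
          using gr[of "real m" t] m1 mt by simp
      qed (use K0 Kp Ns tm sn mn in \<open>auto intro: mult_left_mono\<close>)
      also have "\<dots> = D * (t / s) powr (- lam) * N t x" by (simp add: D_def algebra_simps)
      also have "\<dots> \<le> max K0 D * (t / s) powr (- lam) * N t x" by (rule mult_right_mono[OF DK Ns(2)])
      finally show "N s (T s t *v ((mat 1 - Pc t) *v x)) \<le> max K0 D * (t / s) powr (- lam) * N t x" .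
      have pw: "K0 * (t / s) powr a0 \<le> max K0 D * (t / s) powr max a0 lam"
      proof (rule mult_mono)
        show "(t / s) powr a0 \<le> (t / s) powr max a0 lam"
          by (rule powr_mono) (use s st in auto)
      qed (use K0 in auto)
      show "N t (T t s *v x) \<le> max K0 D * (t / s) powr max a0 lam * N s x"
        using gr[OF s st, of x] mult_right_mono[OF pw Ns(1)] by linarith
      show "N s (T s t *v x) \<le> max K0 D * (t / s) powr max a0 lam * N t x"
        using gr[OF s st, of x] mult_right_mono[OF pw Ns(2)] by linarith
    qed
  qed
qed

end
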